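(* Let $\bar{\mathcal{A}}=(\bar A_1,\dots,\bar A_4)$ be a quadruple of $5\times5$ alternating complex matrices, and suppose the scheme $\bar C\subset\mathbb{P}^3$ cut out by the five $4\times4$ principal sub-Pfaffians of $\bar{\mathcal{A}}(\mathbf{x})=\sum_k\bar A_kx_k$ has a positive-dimensional Zariski tangent space at some point $\bar p$. Then there exist $\bar\gamma\in U_4(\mathbb{C})\times U_5(\mathbb{C})$, an integer $1\le K\le4$ and distinct integers $1\le I,J,L\le5$ such that $\bar{\mathcal{B}}=\bar\gamma(\bar{\mathcal{A}})$ satisfies either (A) $\bar B_K=0$; or (B) $\bar B_k\neq0$ for all $k$, the entries $\bar b^{(K)}_{iI},\bar b^{(K)}_{iJ},\bar b^{(K)}_{iL}$ vanish for all $1\le i\le5$, and either (i) $\bar{\mathcal{B}}(\mathbf{x})_{IL}=\bar{\mathcal{B}}(\mathbf{x})_{JL}=0$, or (ii) $\bar{\mathcal{B}}(\mathbf{x})_{IJ}=0$ and the linear forms $\bar{\mathcal{B}}(\mathbf{x})_{IL}$ and $\bar{\mathcal{B}}(\mathbf{x})_{JL}$ are linearly independent.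
   Context: $U_n\subset\mathrm{GL}_n$ is the subgroup of lower triangular unipotent matrices. A pair $(g_4,g_5)\in U_4(\mathbb{C})\times U_5(\mathbb{C})$ acts on quadruples of alternating matrices by $(A_1,\dots,A_4)^t\mapsto g_4(A_1,\dots,A_4)^t$ (i.e. $A_k\mapsto\sum_l(g_4)_{kl}A_l$) and $A_k\mapsto g_5A_kg_5^t$. For a quadruple $\mathcal{B}=(B_1,\dots,B_4)$, $b^{(k)}_{ij}$ denotes the $(i,j)$ entry of $B_k$, and $\mathcal{B}(\mathbf{x})_{ij}=\sum_kb^{(k)}_{ij}x_k$ is the linear form in the $(i,j)$ entry of $\mathcal{B}(\mathbf{x})=\sum_kB_kx_k$. *)

theory Defs
  imports Complex_Main
begin

text \<open>Conventions: a quadruple of 5x5 complex matrices is a function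
  A :: nat => nat => nat => complex, where A k i j is the (i,j) entry of A_k,
  with 1 <= k <= 4 and 1 <= i, j <= 5 (values outside this range are ignored).
  A point / vector of C^4 is a function x :: nat => complex, using x 1 .. x 4.\<close>

definition alternating5 :: "(nat \<Rightarrow> nat \<Rightarrow> complex) \<Rightarrow> bool" where
  "alternating5 M \<longleftrightarrow>
     (\<forall>i\<in>{1..5}. M i i = 0) \<and> (\<forall>i\<in>{1..5}. \<forall>j\<in>{1..5}. M j i = - M i j)"

definition linform :: "(nat \<Rightarrow> nat \<Rightarrow> nat \<Rightarrow> complex) \<Rightarrow> nat \<Rightarrow> nat \<Rightarrow> (nat \<Rightarrow> complex) \<Rightarrow> complex" where
  "linform A i j x = (\<Sum>k=1..4. A k i j * x k)"

definition pf4 :: "(nat \<Rightarrow> nat \<Rightarrow> complex) \<Rightarrow> nat \<Rightarrow> nat \<Rightarrow> nat \<Rightarrow> nat \<Rightarrow> complex" where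
  "pf4 M a b c d = M a b * M c d - M a c * M b d + M a d * M b c"

definition subpf :: "(nat \<Rightarrow> nat \<Rightarrow> nat \<Rightarrow> complex) \<Rightarrow> nat \<Rightarrow> (nat \<Rightarrow> complex) \<Rightarrow> complex" where
  "subpf A m x =
     (let r = filter (\<lambda>i. i \<noteq> m) [1..<6]
      in pf4 (\<lambda>i j. linform A i j x) (r!0) (r!1) (r!2) (r!3))"

text \<open>p (nonzero in C^4) represents a point of the scheme C in P^3 cut out by the
  five principal sub-Pfaffians.\<close>
definition on_pfaff_scheme :: "(nat \<Rightarrow> nat \<Rightarrow> nat \<Rightarrow> complex) \<Rightarrow> (nat \<Rightarrow> complex) \<Rightarrow> bool" where
  "on_pfaff_scheme A p \<longleftrightarrow>
     (\<exists>k\<in>{1..4}. p k \<noteq> 0) \<and> (\<forall>m\<in>{1..5}. subpf A m p = 0)"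

text \<open>v lies in the Zariski tangent space of the affine cone over C at p: the
  differential at p of every defining Pfaffian vanishes in direction v.\<close>
definition cone_tangent :: "(nat \<Rightarrow> nat \<Rightarrow> nat \<Rightarrow> complex) \<Rightarrow> (nat \<Rightarrow> complex) \<Rightarrow> (nat \<Rightarrow> complex) \<Rightarrow> bool" where
  "cone_tangent A p v \<longleftrightarrow>
     (\<forall>m\<in>{1..5}. ((\<lambda>t. subpf A m (\<lambda>k. p k + t * v k)) has_field_derivative 0) (at 0))"

text \<open>The Zariski tangent space of C at [p] has dimension (dim of cone tangent space) - 1;
  it is positive-dimensional iff the cone tangent space contains two linearly
  independent vectors of C^4.\<close>
definition tangent_pos_dim :: "(nat \<Rightarrow> nat \<Rightarrow> nat \<Rightarrow> complex) \<Rightarrow> (nat \<Rightarrow> complex) \<Rightarrow> bool" where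
  "tangent_pos_dim A p \<longleftrightarrow>
     (\<exists>v w. cone_tangent A p v \<and> cone_tangent A p w \<and>
        (\<forall>a b. (\<forall>k\<in>{1..4}. a * v k + b * w k = 0) \<longrightarrow> a = 0 \<and> b = 0))"

definition unipotent_lower :: "nat \<Rightarrow> (nat \<Rightarrow> nat \<Rightarrow> complex) \<Rightarrow> bool" where
  "unipotent_lower n g \<longleftrightarrow>
     (\<forall>i\<in>{1..n}. \<forall>j\<in>{1..n}. (i < j \<longrightarrow> g i j = 0) \<and> (i = j \<longrightarrow> g i j = 1))"

definition act :: "(nat \<Rightarrow> nat \<Rightarrow> complex) \<Rightarrow> (nat \<Rightarrow> nat \<Rightarrow> complex) \<Rightarrow>
    (nat \<Rightarrow> nat \<Rightarrow> nat \<Rightarrow> complex) \<Rightarrow> (nat \<Rightarrow> nat \<Rightarrow> nat \<Rightarrow> complex)" where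
  "act g4 g5 A = (\<lambda>k i j. \<Sum>l=1..4. g4 k l *
      (\<Sum>a=1..5. \<Sum>b=1..5. g5 i a * A l a b * g5 j b))"

end

theory Submission
  imports Defs
begin

definition phi :: "(nat \<Rightarrow> nat \<Rightarrow> complex) \<Rightarrow> (nat \<Rightarrow> nat \<Rightarrow> complex) \<Rightarrow> nat \<Rightarrow> nat \<Rightarrow> nat \<Rightarrow> nat \<Rightarrow> complex" where
  "phi X Y i j k l = X i j * Y k l + Y i j * X k l - X i k * Y j l - Y i k * X j l + X i l * Y j k + Y i l * X j k"

lemma alt4_zero:
  fixes f :: "nat \<Rightarrow> nat \<Rightarrow> nat \<Rightarrow> nat \<Rightarrow> complex"
  assumes s12: "\<And>i j k l. i \<in> S \<Longrightarrow> j \<in> S \<Longrightarrow> k \<in> S \<Longrightarrow> l \<in> S \<Longrightarrow> f j i k l = - f i j k l"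
    and s23: "\<And>i j k l. i \<in> S \<Longrightarrow> j \<in> S \<Longrightarrow> k \<in> S \<Longrightarrow> l \<in> S \<Longrightarrow> f i k j l = - f i j k l"
    and s34: "\<And>i j k l. i \<in> S \<Longrightarrow> j \<in> S \<Longrightarrow> k \<in> S \<Longrightarrow> l \<in> S \<Longrightarrow> f i j l k = - f i j k l"
    and srt: "\<And>i j k l. i \<in> S \<Longrightarrow> j \<in> S \<Longrightarrow> k \<in> S \<Longrightarrow> l \<in> S \<Longrightarrow> i < j \<Longrightarrow> j < k \<Longrightarrow> k < l \<Longrightarrow> f i j k l = 0"
    and m: "i \<in> S" "j \<in> S" "k \<in> S" "l \<in> S"
  shows "f i j k l = 0"
proof -
  have r12: "f i i k l = 0" if "i \<in> S" "k \<in> S" "l \<in> S" for i k l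
    using s12[OF that(1) that(1) that(2) that(3)] by simp
  have r23: "f i j j l = 0" if "i \<in> S" "j \<in> S" "l \<in> S" for i j l
    using s23[OF that(1) that(2) that(2) that(3)] by simp
  have r34: "f i j k k = 0" if "i \<in> S" "j \<in> S" "k \<in> S" for i j k
    using s34[OF that(1) that(2) that(3) that(3)] by simp
  have A: "f i j k l = 0" if "i < j" "j < k" and mm: "i \<in> S" "j \<in> S" "k \<in> S" "l \<in> S" for i j k l
  proof -
    consider "l < i" | "l = i" | "i < l" "l < j" | "l = j" | "j < l" "l < k" | "l = k" | "k < l"
      by linarith
    then show ?thesis
    proof cases
      case 1 then show ?thesis using srt[of l i j k] s34[of i j k l] s23[of i j l k] s12[of i l j k] mm that by simp
    next
      case 2 then show ?thesis using r12[of i j k] s34[of i j k l] s23[of i j l k] mm by simp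
    next
      case 3 then show ?thesis using srt[of i l j k] s34[of i j k l] s23[of i j l k] mm that by simp
    next
      case 4 then show ?thesis using r23[of i j k] s34[of i j k l] mm by simp
    next
      case 5 then show ?thesis using srt[of i j l k] s34[of i j k l] mm that by simp
    next
      case 6 then show ?thesis using r34 mm by simp
    next
      case 7 then show ?thesis using srt mm that by simp
    qed
  qed
  have B: "f i j k l = 0" if "i < j" and mm: "i \<in> S" "j \<in> S" "k \<in> S" "l \<in> S" for i j k l
  proof -
    consider "k < i" | "k = i" | "i < k" "k < j" | "k = j" | "j < k"
      by linarith
    then show ?thesis
    proof cases
      case 1 then show ?thesis using A[of k i j l] s23[of i j k l] s12[of i k j l] mm that by simp
    next
      case 2 then show ?thesis using r12[of i j l] s23[of i j k l] s12[of i k j l] mm that by simp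
    next
      case 3 then show ?thesis using A[of i k j l] s23[of i j k l] mm that by simp
    next
      case 4 then show ?thesis using r23 mm by simp
    next
      case 5 then show ?thesis using A mm that by simp
    qed
  qed
  consider "i < j" | "i = j" | "j < i" by linarith
  then show ?thesis
  proof cases
    case 1 then show ?thesis using B m by simp
  next
    case 2 then show ?thesis using r12 m by simp
  next
    case 3 then show ?thesis using B[of j i k l] s12[of i j k l] m by simp
  qed
qed

lemma phi_swaps:
  assumes X: "alternating5 X" and Y: "alternating5 Y"
    and m: "i \<in> {1..5}" "j \<in> {1..5}" "k \<in> {1..5}" "l \<in> {1..5}"
  shows "phi X Y j i k l = - phi X Y i j k l" "phi X Y i k j l = - phi X Y i j k l"
    "phi X Y i j l k = - phi X Y i j k l"
proof -
  have a: "X j i = - X i j" "Y j i = - Y i j" "X k j = - X j k" "Y k j = - Y j k"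
    "X l k = - X k l" "Y l k = - Y k l"
  proof -
    have X2: "\<forall>i\<in>{1..5}. \<forall>j\<in>{1..5}. X j i = - X i j" and Y2: "\<forall>i\<in>{1..5}. \<forall>j\<in>{1..5}. Y j i = - Y i j"
      using X Y unfolding alternating5_def by blast+
    show "X j i = - X i j" "Y j i = - Y i j" "X k j = - X j k" "Y k j = - Y j k"
    "X l k = - X k l" "Y l k = - Y k l"
      using X2[rule_format, OF m(1) m(2)] Y2[rule_format, OF m(1) m(2)]
        X2[rule_format, OF m(2) m(3)] Y2[rule_format, OF m(2) m(3)]
        X2[rule_format, OF m(3) m(4)] Y2[rule_format, OF m(3) m(4)] by simp_all
  qed
  show "phi X Y j i k l = - phi X Y i j k l" "phi X Y i k j l = - phi X Y i j k l"
    "phi X Y i j l k = - phi X Y i j k l"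
    unfolding phi_def a by (simp_all add: algebra_simps)
qed

lemma phi_zero:
  assumes X: "alternating5 X" and Y: "alternating5 Y"
    and h: "phi X Y 2 3 4 5 = 0" "phi X Y 1 3 4 5 = 0" "phi X Y 1 2 4 5 = 0"
       "phi X Y 1 2 3 5 = 0" "phi X Y 1 2 3 4 = 0"
    and m: "i \<in> {1..5}" "j \<in> {1..5}" "k \<in> {1..5}" "l \<in> {1..5}"
  shows "phi X Y i j k l = 0"
proof (rule alt4_zero[where f="phi X Y" and S="{1..5}"])
  show "phi X Y i j k l = 0" if "i \<in> {1..5}" "j \<in> {1..5}" "k \<in> {1..5}" "l \<in> {1..5}"
    "i < j" "j < k" "k < l" for i j k l
  proof -
    have "(i,j,k,l) \<in> {(2,3,4,5),(1,3,4,5),(1,2,4,5),(1,2,3,5),(1,2,3,4)}"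
      using that by simp presburger
    then show ?thesis using h by auto
  qed
qed (rule phi_swaps[OF X Y] m | assumption)+

lemma subpf_expl:
  "subpf A 1 x = pf4 (\<lambda>i j. linform A i j x) 2 3 4 5"
  "subpf A 2 x = pf4 (\<lambda>i j. linform A i j x) 1 3 4 5"
  "subpf A 3 x = pf4 (\<lambda>i j. linform A i j x) 1 2 4 5"
  "subpf A 4 x = pf4 (\<lambda>i j. linform A i j x) 1 2 3 5"
  "subpf A 5 x = pf4 (\<lambda>i j. linform A i j x) 1 2 3 4"
proof -
  have u: "[1..<6] = [1::nat,2,3,4,5]" by (simp add: upt_rec)
  show "subpf A 1 x = pf4 (\<lambda>i j. linform A i j x) 2 3 4 5"
  "subpf A 2 x = pf4 (\<lambda>i j. linform A i j x) 1 3 4 5"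
  "subpf A 3 x = pf4 (\<lambda>i j. linform A i j x) 1 2 4 5"
  "subpf A 4 x = pf4 (\<lambda>i j. linform A i j x) 1 2 3 5"
  "subpf A 5 x = pf4 (\<lambda>i j. linform A i j x) 1 2 3 4"
    unfolding subpf_def u by (simp_all add: Let_def)
qed

lemma linform_add: "linform A i j (\<lambda>k. p k + t * v k) = linform A i j p + t * linform A i j v"
  unfolding linform_def by (simp add: algebra_simps sum.distrib sum_distrib_left)

lemma pf4_deriv:
  fixes M N :: "nat \<Rightarrow> nat \<Rightarrow> complex"
  shows "((\<lambda>t. pf4 (\<lambda>i j. M i j + t * N i j) a b c d) has_field_derivative phi M N a b c d) (at 0)"
  unfolding pf4_def phi_def
  by (auto intro!: derivative_eq_intros simp: algebra_simps)

lemma tangent_one: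
  assumes "((\<lambda>t. subpf A m (\<lambda>k. p k + t * v k)) has_field_derivative 0) (at 0)"
    and "\<And>x. subpf A m x = pf4 (\<lambda>i j. linform A i j x) a b c d"
  shows "phi (\<lambda>i j. linform A i j p) (\<lambda>i j. linform A i j v) a b c d = 0"
proof -
  have "((\<lambda>t. subpf A m (\<lambda>k. p k + t * v k)) has_field_derivative
     phi (\<lambda>i j. linform A i j p) (\<lambda>i j. linform A i j v) a b c d) (at 0)"
    unfolding assms(2) linform_add by (rule pf4_deriv)
  then show ?thesis using assms(1) DERIV_unique by blast
qed

lemma tangent_phi:
  assumes "cone_tangent A p v"
  defines "M \<equiv> (\<lambda>i j. linform A i j p)" and "N \<equiv> (\<lambda>i j. linform A i j v)"
  shows "phi M N 2 3 4 5 = 0" "phi M N 1 3 4 5 = 0" "phi M N 1 2 4 5 = 0"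
       "phi M N 1 2 3 5 = 0" "phi M N 1 2 3 4 = 0"
proof -
  have d: "((\<lambda>t. subpf A m (\<lambda>k. p k + t * v k)) has_field_derivative 0) (at 0)" if "m \<in> {1..5}" for m
    using assms(1) that unfolding cone_tangent_def by blast
  show "phi M N 2 3 4 5 = 0" unfolding M_def N_def
    using tangent_one[OF d[of 1] subpf_expl(1)] by simp
  show "phi M N 1 3 4 5 = 0" unfolding M_def N_def
    using tangent_one[OF d[of 2] subpf_expl(2)] by simp
  show "phi M N 1 2 4 5 = 0" unfolding M_def N_def
    using tangent_one[OF d[of 3] subpf_expl(3)] by simp
  show "phi M N 1 2 3 5 = 0" unfolding M_def N_def
    using tangent_one[OF d[of 4] subpf_expl(4)] by simp
  show "phi M N 1 2 3 4 = 0" unfolding M_def N_def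
    using tangent_one[OF d[of 5] subpf_expl(5)] by simp
qed

lemma scheme_phi:
  assumes "on_pfaff_scheme A p"
  defines "M \<equiv> (\<lambda>i j. linform A i j p)"
  shows "phi M M 2 3 4 5 = 0" "phi M M 1 3 4 5 = 0" "phi M M 1 2 4 5 = 0"
       "phi M M 1 2 3 5 = 0" "phi M M 1 2 3 4 = 0"
proof -
  have z: "subpf A m p = 0" if "m \<in> {1..5}" for m
    using assms(1) that unfolding on_pfaff_scheme_def by blast
  have h: "pf4 M 2 3 4 5 = 0" "pf4 M 1 3 4 5 = 0" "pf4 M 1 2 4 5 = 0" "pf4 M 1 2 3 5 = 0" "pf4 M 1 2 3 4 = 0"
    using z[of 1] z[of 2] z[of 3] z[of 4] z[of 5] unfolding M_def subpf_expl by simp_all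
  have e: "phi M M a b c d = 2 * pf4 M a b c d" for a b c d
    unfolding phi_def pf4_def by (simp add: algebra_simps)
  show "phi M M 2 3 4 5 = 0" "phi M M 1 3 4 5 = 0" "phi M M 1 2 4 5 = 0"
       "phi M M 1 2 3 5 = 0" "phi M M 1 2 3 4 = 0" using h e by simp_all
qed

lemma alt_linform:
  assumes "\<forall>k\<in>{1..4}. alternating5 (A k)"
  shows "alternating5 (\<lambda>i j. linform A i j x)"
proof -
  have d: "A k i i = 0" if "k \<in> {1..4}" "i \<in> {1..5}" for k i :: nat
    using assms that unfolding alternating5_def by blast
  have s: "A k j i = - A k i j" if "k \<in> {1..4}" "i \<in> {1..5}" "j \<in> {1..5}" for k i j :: nat
    using assms that unfolding alternating5_def by blast
  show ?thesis unfolding alternating5_def linform_def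
  proof (intro conjI ballI)
    fix i :: nat assume i: "i \<in> {1..5}"
    show "(\<Sum>k=1..4. A k i i * x k) = 0" using d[OF _ i] by (intro sum.neutral) simp
  next
    fix i j :: nat assume i: "i \<in> {1..5}" and j: "j \<in> {1..5}"
    have "(\<Sum>k=1..4. A k j i * x k) = (\<Sum>k=1..4. - (A k i j * x k))"
      using s[OF _ i j] by (intro sum.cong) auto
    then show "(\<Sum>k=1..4. A k j i * x k) = - (\<Sum>k=1..4. A k i j * x k)"
      by (simp add: sum_negf)
  qed
qed

definition conj5 :: "(nat \<Rightarrow> nat \<Rightarrow> complex) \<Rightarrow> (nat \<Rightarrow> nat \<Rightarrow> complex) \<Rightarrow> nat \<Rightarrow> nat \<Rightarrow> complex" where
  "conj5 g X i j = (\<Sum>a=1..5. \<Sum>b=1..5. g i a * X a b * g j b)"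
definition bil :: "(nat \<Rightarrow> nat \<Rightarrow> complex) \<Rightarrow> (nat \<Rightarrow> complex) \<Rightarrow> (nat \<Rightarrow> complex) \<Rightarrow> complex" where
  "bil X s t = (\<Sum>i=1..5. \<Sum>j=1..5. s i * X i j * t j)"
definition ip :: "(nat \<Rightarrow> complex) \<Rightarrow> (nat \<Rightarrow> complex) \<Rightarrow> complex" where
  "ip s t = (\<Sum>j=1..5. s j * t j)"
definition rs :: "(nat \<Rightarrow> nat \<Rightarrow> complex) \<Rightarrow> nat \<Rightarrow> (nat \<Rightarrow> complex) \<Rightarrow> complex" where
  "rs X i s = (\<Sum>k=1..5. X i k * s k)"

lemma conj5_bil: "conj5 g X i j = bil X (g i) (g j)"
  unfolding conj5_def bil_def by simp

lemma bil_wedge: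
  assumes "\<forall>i\<in>{1..5}. \<forall>j\<in>{1..5}. X i j = \<mu> * (x i * y j - x j * y i)"
  shows "bil X s t = \<mu> * (ip s x * ip t y - ip s y * ip t x)"
proof -
  have X: "\<And>i j. i \<in> {1..5} \<Longrightarrow> j \<in> {1..5} \<Longrightarrow> X i j = \<mu> * (x i * y j - x j * y i)"
    using assms by blast
  have "bil X s t = (\<Sum>i=1..5. \<Sum>j=1..5. \<mu> * (s i * x i) * (t j * y j) - \<mu> * (s i * y i) * (t j * x j))"
    unfolding bil_def by (intro sum.cong refl) (simp add: X algebra_simps)
  also have "\<dots> = \<mu> * (\<Sum>i=1..5. \<Sum>j=1..5. (s i * x i) * (t j * y j)) - \<mu> * (\<Sum>i=1..5. \<Sum>j=1..5. (s i * y i) * (t j * x j))"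
    by (simp only: sum_subtractf sum_distrib_left mult.assoc)
  also have "\<dots> = \<mu> * (ip s x * ip t y - ip s y * ip t x)"
    unfolding ip_def by (simp add: sum_product right_diff_distrib)
  finally show ?thesis .
qed

lemma rs_wedge:
  assumes "\<forall>i\<in>{1..5}. \<forall>j\<in>{1..5}. X i j = \<mu> * (x i * y j - x j * y i)" "i \<in> {1..5}"
  shows "rs X i s = \<mu> * (x i * ip s y - y i * ip s x)"
proof -
  have X: "\<And>j. j \<in> {1..5} \<Longrightarrow> X i j = \<mu> * (x i * y j - x j * y i)"
    using assms by blast
  have "rs X i s = (\<Sum>k=1..5. \<mu> * x i * (s k * y k) - \<mu> * y i * (s k * x k))"
    unfolding rs_def by (intro sum.cong refl) (simp add: X algebra_simps)
  also have "\<dots> = \<mu> * (x i * ip s y - y i * ip s x)"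
    unfolding ip_def by (simp add: sum_subtractf sum_distrib_left algebra_simps)
  finally show ?thesis .
qed

lemma phi_sum:
  "(\<Sum>k=1..5. \<Sum>l=1..5. s k * t l * phi X Y a b k l) =
    X a b * bil Y s t + Y a b * bil X s t - rs X a s * rs Y b t - rs Y a s * rs X b t
    + rs X a t * rs Y b s + rs Y a t * rs X b s"
proof -
  have e1: "(\<Sum>k=1..5. \<Sum>l=1..5. s k * t l * (X a b * Y k l)) = X a b * bil Y s t" for X Y
    by (simp add: bil_def sum_distrib_left algebra_simps)
  have e3: "(\<Sum>k=1..5. \<Sum>l=1..5. s k * t l * (X a k * Y b l)) = rs X a s * rs Y b t" for X Y a b
    by (simp add: rs_def sum_product algebra_simps)
  have e5: "(\<Sum>k=1..5. \<Sum>l=1..5. s k * t l * (X a l * Y b k)) = rs X a t * rs Y b s" for X Y a b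
    unfolding rs_def sum_product by (subst sum.swap) (simp add: algebra_simps)
  have "(\<Sum>k=1..5. \<Sum>l=1..5. s k * t l * phi X Y a b k l) =
    (\<Sum>k=1..5. \<Sum>l=1..5. s k * t l * (X a b * Y k l) + s k * t l * (Y a b * X k l)
      - s k * t l * (X a k * Y b l) - s k * t l * (Y a k * X b l)
      + s k * t l * (X a l * Y b k) + s k * t l * (Y a l * X b k))"
    unfolding phi_def by (simp add: algebra_simps)
  also have "\<dots> = (\<Sum>k=1..5. \<Sum>l=1..5. s k * t l * (X a b * Y k l)) + (\<Sum>k=1..5. \<Sum>l=1..5. s k * t l * (Y a b * X k l))
      - (\<Sum>k=1..5. \<Sum>l=1..5. s k * t l * (X a k * Y b l)) - (\<Sum>k=1..5. \<Sum>l=1..5. s k * t l * (Y a k * X b l))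
      + (\<Sum>k=1..5. \<Sum>l=1..5. s k * t l * (X a l * Y b k)) + (\<Sum>k=1..5. \<Sum>l=1..5. s k * t l * (Y a l * X b k))"
    by (simp only: sum.distrib sum_subtractf)
  also have "\<dots> = X a b * bil Y s t + Y a b * bil X s t - rs X a s * rs Y b t - rs Y a s * rs X b t
    + rs X a t * rs Y b s + rs Y a t * rs X b s"
    by (simp only: e1 e3 e5)
  finally show ?thesis .
qed

definition gmat :: "nat \<Rightarrow> nat \<Rightarrow> (nat \<Rightarrow> complex) \<Rightarrow> (nat \<Rightarrow> complex) \<Rightarrow> nat \<Rightarrow> nat \<Rightarrow> complex" where
  "gmat a b u u' i j = (if i = j then 1 else 0) - (if j = a then u i - (if i = a then 1 else 0) else 0)
      - (if j = b then u' i - (if i = b then 1 else 0) else 0)"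

lemma sum_if_eq:
  assumes "c \<in> {1..5}"
  shows "(\<Sum>j=1..5. (if j = c then x else 0) * w j) = x * (w (c::nat) :: complex)"
proof -
  have "(\<Sum>j=1..5. (if j = c then x else 0) * w j) = (\<Sum>j=1..5. if j = c then x * w c else 0)"
    by (rule sum.cong) auto
  also have "\<dots> = x * w c" using assms by (simp add: sum.delta')
  finally show ?thesis .
qed

lemma gmat_row:
  "gmat a b u u' c = (\<lambda>j. (if j = c then 1 else 0) - (if j = a then u c - (if c = a then 1 else 0) else 0)
      - (if j = b then u' c - (if c = b then 1 else 0) else 0))"
  unfolding gmat_def by auto

lemma ip_gmat:
  assumes "a \<in> {1..5}" "b \<in> {1..5}" "c \<in> {1..5}"
  shows "ip (gmat a b u u' c) w = w c - (u c - (if c = a then 1 else 0)) * w a - (u' c - (if c = b then 1 else 0)) * w b"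
  unfolding ip_def gmat_row
  by (simp only: left_diff_distrib sum_subtractf sum_if_eq assms) simp

lemma normal_form:
  assumes altM: "alternating5 M"
    and PM: "\<And>i j k l. i \<in> {1..5} \<Longrightarrow> j \<in> {1..5} \<Longrightarrow> k \<in> {1..5} \<Longrightarrow> l \<in> {1..5} \<Longrightarrow> phi M M i j k l = 0"
    and nz: "\<exists>i\<in>{1..5}. \<exists>j\<in>{1..5}. M i j \<noteq> 0"
  shows "\<exists>a b g. a \<in> {1..5} \<and> b \<in> {1..5} \<and> a < b \<and> unipotent_lower 5 g \<and> M a b \<noteq> 0 \<and>
    (\<forall>i\<in>{1..5}. \<forall>j\<in>{1..5}. conj5 g M i j =
        M a b * ((if i = a \<and> j = b then 1 else 0) - (if i = b \<and> j = a then 1 else 0))) \<and>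
    (\<forall>N. (\<forall>k\<in>{1..5}. \<forall>l\<in>{1..5}. phi M N a b k l = 0) \<longrightarrow>
       (\<forall>c\<in>{1..5}. \<forall>d\<in>{1..5}. c \<noteq> a \<longrightarrow> c \<noteq> b \<longrightarrow> d \<noteq> a \<longrightarrow> d \<noteq> b \<longrightarrow> conj5 g N c d = 0))"
proof -
  have Mdiag: "M i i = 0" if "i \<in> {1..5}" for i using altM that unfolding alternating5_def by blast
  have Malt: "M j i = - M i j" if "i \<in> {1..5}" "j \<in> {1..5}" for i j
    using altM that unfolding alternating5_def by blast
  define a where "a = (LEAST i. i \<in> {1..5} \<and> (\<exists>j\<in>{1..5}. M i j \<noteq> 0))"
  have aex: "\<exists>i. i \<in> {1..5} \<and> (\<exists>j\<in>{1..5}. M i j \<noteq> 0)" using nz by blast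
  have a1: "a \<in> {1..5}" and a2: "\<exists>j\<in>{1..5}. M a j \<noteq> 0"
    using LeastI_ex[OF aex] unfolding a_def[symmetric] by blast+
  have rowz: "M i j = 0" if "i \<in> {1..5}" "j \<in> {1..5}" "i < a" for i j
    using not_less_Least[of i "\<lambda>i. i \<in> {1..5} \<and> (\<exists>j\<in>{1..5}. M i j \<noteq> 0)"] that
    unfolding a_def[symmetric] by blast
  define b where "b = (LEAST j. j \<in> {1..5} \<and> M a j \<noteq> 0)"
  have bex: "\<exists>j. j \<in> {1..5} \<and> M a j \<noteq> 0" using a2 by blast
  have b1: "b \<in> {1..5}" and b2: "M a b \<noteq> 0"
    using LeastI_ex[OF bex] unfolding b_def[symmetric] by blast+
  have rowa: "M a j = 0" if "j \<in> {1..5}" "j < b" for j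
    using not_less_Least[of j "\<lambda>j. j \<in> {1..5} \<and> M a j \<noteq> 0"] that
    unfolding b_def[symmetric] by blast
  have ab: "a < b"
  proof -
    have "b \<noteq> a" using b2 Mdiag[OF a1] by auto
    moreover have "\<not> b < a"
    proof
      assume "b < a"
      then have "M b a = 0" using rowz[OF b1 a1] by blast
      then show False using Malt[OF a1 b1] b2 by simp
    qed
    ultimately show ?thesis by simp
  qed
  define \<mu> where "\<mu> = M a b"
  have mu: "\<mu> \<noteq> 0" using b2 \<mu>_def by simp
  define u where "u = (\<lambda>i. - M b i / \<mu>)"
  define u' where "u' = (\<lambda>i. M a i / \<mu>)"
  have ua: "u a = 1" unfolding u_def using Malt[OF a1 b1] mu \<mu>_def by simp
  have ub: "u b = 0" unfolding u_def using Mdiag[OF b1] by simp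
  have u'a: "u' a = 0" unfolding u'_def using Mdiag[OF a1] by simp
  have u'b: "u' b = 1" unfolding u'_def using mu \<mu>_def by simp
  have ulow: "u i = 0" if "i \<in> {1..5}" "i < a" for i
    unfolding u_def using rowz[OF that(1) b1 that(2)] Malt[OF that(1) b1] by simp
  have u'low: "u' i = 0" if "i \<in> {1..5}" "i < b" for i
    unfolding u'_def using rowa[OF that] by simp
  have pl: "\<forall>i\<in>{1..5}. \<forall>j\<in>{1..5}. M i j = \<mu> * (u i * u' j - u j * u' i)"
  proof (intro ballI)
    fix i j :: nat assume i: "i \<in> {1..5}" and j: "j \<in> {1..5}"
    have "phi M M a b i j = 0" using PM[OF a1 b1 i j] .
    moreover have "phi M M a b i j = 2 * (M a b * M i j - M a i * M b j + M a j * M b i)"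
      unfolding phi_def by (simp add: algebra_simps)
    ultimately have "2 * (M a b * M i j - M a i * M b j + M a j * M b i) = 0" by metis
    then have "M a b * M i j - M a i * M b j + M a j * M b i = 0"
      by (simp only: mult_eq_0_iff) simp
    then show "M i j = \<mu> * (u i * u' j - u j * u' i)"
      unfolding u_def u'_def \<mu>_def using b2
      by (simp add: field_simps power2_eq_square) (metis distrib_left)
  qed
  define g where "g = gmat a b u u'"
  have gu: "ip (g c) u = (if c = a then 1 else 0)" if "c \<in> {1..5}" for c
    unfolding g_def using ip_gmat[OF a1 b1 that] ua ub by simp
  have gu': "ip (g c) u' = (if c = b then 1 else 0)" if "c \<in> {1..5}" for c
    unfolding g_def using ip_gmat[OF a1 b1 that] u'a u'b ab by simp
  have unip: "unipotent_lower 5 g"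
    unfolding unipotent_lower_def g_def gmat_def
    using ulow u'low ua u'b ab by auto
  show ?thesis
  proof (intro exI conjI)
    show "a \<in> {1..5}" "b \<in> {1..5}" "a < b" "unipotent_lower 5 g" "M a b \<noteq> 0"
      using a1 b1 ab unip b2 by auto
    show "\<forall>i\<in>{1..5}. \<forall>j\<in>{1..5}. conj5 g M i j =
        M a b * ((if i = a \<and> j = b then 1 else 0) - (if i = b \<and> j = a then 1 else 0))"
    proof (intro ballI)
      fix i j :: nat assume i: "i \<in> {1..5}" and j: "j \<in> {1..5}"
      show "conj5 g M i j = M a b * ((if i = a \<and> j = b then 1 else 0) - (if i = b \<and> j = a then 1 else 0))"
        unfolding conj5_bil bil_wedge[OF pl] gu[OF i] gu[OF j] gu'[OF i] gu'[OF j] \<mu>_def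
        using ab by auto
    qed
    show "\<forall>N. (\<forall>k\<in>{1..5}. \<forall>l\<in>{1..5}. phi M N a b k l = 0) \<longrightarrow>
       (\<forall>c\<in>{1..5}. \<forall>d\<in>{1..5}. c \<noteq> a \<longrightarrow> c \<noteq> b \<longrightarrow> d \<noteq> a \<longrightarrow> d \<noteq> b \<longrightarrow> conj5 g N c d = 0)"
    proof (intro allI impI ballI)
      fix N :: "nat \<Rightarrow> nat \<Rightarrow> complex" and c d :: nat assume P: "\<forall>k\<in>{1..5}. \<forall>l\<in>{1..5}. phi M N a b k l = 0"
        and c: "c \<in> {1..5}" and d: "d \<in> {1..5}" and cd: "c \<noteq> a" "c \<noteq> b" "d \<noteq> a" "d \<noteq> b"
      have "(\<Sum>k=1..5. \<Sum>l=1..5. g c k * g d l * phi M N a b k l) = 0"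
        using P by (intro sum.neutral ballI) simp
      moreover have "(\<Sum>k=1..5. \<Sum>l=1..5. g c k * g d l * phi M N a b k l) = \<mu> * bil N (g c) (g d)"
        unfolding phi_sum bil_wedge[OF pl] rs_wedge[OF pl a1] rs_wedge[OF pl b1]
          gu[OF c] gu[OF d] gu'[OF c] gu'[OF d] \<mu>_def
        using cd by simp
      ultimately show "conj5 g N c d = 0" unfolding conj5_bil using mu by simp
    qed
  qed
qed

lemma dep_core:
  fixes x1 x2 x3 x4 y1 y2 y3 y4 z1 z2 z3 z4 v1 v2 v3 v4 w1 w2 w3 w4 :: complex
  assumes hx: "x1*v1 + x2*v2 + x3*v3 + x4*v4 = 0" "x1*w1 + x2*w2 + x3*w3 + x4*w4 = 0"
    and hy: "y1*v1 + y2*v2 + y3*v3 + y4*v4 = 0" "y1*w1 + y2*w2 + y3*w3 + y4*w4 = 0"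
    and hz: "z1*v1 + z2*v2 + z3*v3 + z4*v4 = 0" "z1*w1 + z2*w2 + z3*w3 + z4*w4 = 0"
    and p: "v1*w2 - v2*w1 \<noteq> 0"
  shows "\<exists>c1 c2 c3. (c1 \<noteq> 0 \<or> c2 \<noteq> 0 \<or> c3 \<noteq> 0) \<and> c1*x1 + c2*y1 + c3*z1 = 0 \<and>
    c1*x2 + c2*y2 + c3*z2 = 0 \<and> c1*x3 + c2*y3 + c3*z3 = 0 \<and> c1*x4 + c2*y4 + c3*z4 = 0"
proof -
  have "\<exists>c1 c2 c3. (c1 \<noteq> 0 \<or> c2 \<noteq> 0 \<or> c3 \<noteq> 0) \<and> c1*x3 + c2*y3 + c3*z3 = 0 \<and> c1*x4 + c2*y4 + c3*z4 = 0"
  proof (cases "y3*z4 - y4*z3 \<noteq> 0 \<or> x3*z4 - x4*z3 \<noteq> 0 \<or> x3*y4 - x4*y3 \<noteq> 0")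
    case True
    show ?thesis
      by (rule exI[of _ "y3*z4 - y4*z3"], rule exI[of _ "-(x3*z4 - x4*z3)"], rule exI[of _ "x3*y4 - x4*y3"])
        (use True in \<open>auto simp: algebra_simps\<close>)
  next
    case False
    then have D: "x3*y4 - x4*y3 = 0" by blast
    show ?thesis
    proof (cases "x3 \<noteq> 0")
      case True
      show ?thesis
        by (rule exI[of _ y3], rule exI[of _ "-x3"], rule exI[of _ 0])
          (use True D in \<open>auto simp: algebra_simps\<close>)
    next
      case x3: False
      show ?thesis
      proof (cases "x4 \<noteq> 0")
        case True
        show ?thesis
          by (rule exI[of _ y4], rule exI[of _ "-x4"], rule exI[of _ 0])
            (use True D x3 in \<open>auto simp: algebra_simps\<close>)
      next
        case False
        show ?thesis
          by (rule exI[of _ 1], rule exI[of _ 0], rule exI[of _ 0])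
            (use False x3 in \<open>auto\<close>)
      qed
    qed
  qed
  then obtain c1 c2 c3 where nz: "c1 \<noteq> 0 \<or> c2 \<noteq> 0 \<or> c3 \<noteq> 0"
    and e3: "c1*x3 + c2*y3 + c3*z3 = 0" and e4: "c1*x4 + c2*y4 + c3*z4 = 0" by blast
  have i1: "(v1*w2 - v2*w1) * (c1*x1 + c2*y1 + c3*z1) =
    - w2*(v3*(c1*x3 + c2*y3 + c3*z3) + v4*(c1*x4 + c2*y4 + c3*z4))
    + v2*(w3*(c1*x3 + c2*y3 + c3*z3) + w4*(c1*x4 + c2*y4 + c3*z4))
    + c1*(w2*(x1*v1 + x2*v2 + x3*v3 + x4*v4) - v2*(x1*w1 + x2*w2 + x3*w3 + x4*w4))
    + c2*(w2*(y1*v1 + y2*v2 + y3*v3 + y4*v4) - v2*(y1*w1 + y2*w2 + y3*w3 + y4*w4))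
    + c3*(w2*(z1*v1 + z2*v2 + z3*v3 + z4*v4) - v2*(z1*w1 + z2*w2 + z3*w3 + z4*w4))"
    by algebra
  have i2: "(v1*w2 - v2*w1) * (c1*x2 + c2*y2 + c3*z2) =
    w1*(v3*(c1*x3 + c2*y3 + c3*z3) + v4*(c1*x4 + c2*y4 + c3*z4))
    - v1*(w3*(c1*x3 + c2*y3 + c3*z3) + w4*(c1*x4 + c2*y4 + c3*z4))
    + c1*(v1*(x1*w1 + x2*w2 + x3*w3 + x4*w4) - w1*(x1*v1 + x2*v2 + x3*v3 + x4*v4))
    + c2*(v1*(y1*w1 + y2*w2 + y3*w3 + y4*w4) - w1*(y1*v1 + y2*v2 + y3*v3 + y4*v4))
    + c3*(v1*(z1*w1 + z2*w2 + z3*w3 + z4*w4) - w1*(z1*v1 + z2*v2 + z3*v3 + z4*v4))"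
    by algebra
  have "c1*x1 + c2*y1 + c3*z1 = 0" using i1 unfolding e3 e4 hx hy hz using p by simp
  moreover have "c1*x2 + c2*y2 + c3*z2 = 0" using i2 unfolding e3 e4 hx hy hz using p by simp
  ultimately show ?thesis using nz e3 e4 by blast
qed

lemma sum4_perm:
  assumes "{1..4} = {i,j,k,l::nat}" "distinct [i,j,k,l]"
  shows "(\<Sum>q=1..4. F q) = F i + F j + F k + (F l :: complex)"
  unfolding assms(1) using assms(2) by (simp add: algebra_simps)

lemma dep_gen:
  fixes f1 f2 f3 v w :: "nat \<Rightarrow> complex"
  assumes S: "{1..4} = {i,j,k,l::nat}" "distinct [i,j,k,l]"
    and h: "(\<Sum>q=1..4. f1 q * v q) = 0" "(\<Sum>q=1..4. f1 q * w q) = 0"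
      "(\<Sum>q=1..4. f2 q * v q) = 0" "(\<Sum>q=1..4. f2 q * w q) = 0"
      "(\<Sum>q=1..4. f3 q * v q) = 0" "(\<Sum>q=1..4. f3 q * w q) = 0"
    and p: "v i * w j - v j * w i \<noteq> 0"
  shows "\<exists>c1 c2 c3. (c1 \<noteq> 0 \<or> c2 \<noteq> 0 \<or> c3 \<noteq> 0) \<and> (\<forall>q\<in>{1..4}. c1 * f1 q + c2 * f2 q + c3 * f3 q = 0)"
proof -
  obtain c1 c2 c3 where c: "c1 \<noteq> 0 \<or> c2 \<noteq> 0 \<or> c3 \<noteq> 0"
    "c1 * f1 i + c2 * f2 i + c3 * f3 i = 0" "c1 * f1 j + c2 * f2 j + c3 * f3 j = 0"
    "c1 * f1 k + c2 * f2 k + c3 * f3 k = 0" "c1 * f1 l + c2 * f2 l + c3 * f3 l = 0"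
    using dep_core[OF h(1,2,3,4,5,6)[unfolded sum4_perm[OF S]] p] by blast
  show ?thesis
    by (rule exI[of _ c1], rule exI[of _ c2], rule exI[of _ c3]) (use c S(1) in auto)
qed

lemma dep3:
  fixes f1 f2 f3 v w :: "nat \<Rightarrow> complex"
  assumes h: "(\<Sum>q=1..4. f1 q * v q) = 0" "(\<Sum>q=1..4. f1 q * w q) = 0"
      "(\<Sum>q=1..4. f2 q * v q) = 0" "(\<Sum>q=1..4. f2 q * w q) = 0"
      "(\<Sum>q=1..4. f3 q * v q) = 0" "(\<Sum>q=1..4. f3 q * w q) = 0"
    and ind: "\<forall>a b. (\<forall>k\<in>{1..4}. a * v k + b * w k = 0) \<longrightarrow> a = 0 \<and> b = 0"
  shows "\<exists>c1 c2 c3. (c1 \<noteq> 0 \<or> c2 \<noteq> 0 \<or> c3 \<noteq> 0) \<and> (\<forall>q\<in>{1..4}. c1 * f1 q + c2 * f2 q + c3 * f3 q = 0)"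
proof -
  have "\<exists>i\<in>{1..4}. \<exists>j\<in>{1..4}. v i * w j - v j * w i \<noteq> 0"
  proof (rule ccontr)
    assume "\<not> ?thesis"
    then have z: "v i * w j - v j * w i = 0" if "i \<in> {1..4}" "j \<in> {1..4}" for i j using that by blast
    show False
    proof (cases "\<exists>k\<in>{1..4}. v k \<noteq> 0")
      case True
      then obtain k where k: "k \<in> {1..4}" "v k \<noteq> 0" by blast
      have "\<forall>q\<in>{1..4}. w k * v q + (- v k) * w q = 0"
        using z[OF k(1)] by (auto simp: algebra_simps)
      then show False using ind[rule_format, of "w k" "- v k"] k(2) by simp
    next
      case False
      then have "\<forall>q\<in>{1..4}. 1 * v q + 0 * w q = 0" by auto
      then show False using ind[rule_format, of 1 0] by simp
    qed
  qed
  then obtain i j where ij: "i \<in> {1..4}" "j \<in> {1..4}" "v i * w j - v j * w i \<noteq> 0" by blast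
  then have ne: "i \<noteq> j" by auto
  have sym: "v j * w i - v i * w j \<noteq> 0" using ij(3) by (auto simp: algebra_simps)
  have "(i,j) \<in> {(1,2),(1,3),(1,4),(2,3),(2,4),(3,4)} \<or> (j,i) \<in> {(1,2),(1,3),(1,4),(2,3),(2,4),(3,4)}"
    using ij(1,2) ne by simp presburger
  then consider "v 1 * w 2 - v 2 * w 1 \<noteq> 0" | "v 1 * w 3 - v 3 * w 1 \<noteq> 0" | "v 1 * w 4 - v 4 * w 1 \<noteq> 0"
    | "v 2 * w 3 - v 3 * w 2 \<noteq> 0" | "v 2 * w 4 - v 4 * w 2 \<noteq> 0" | "v 3 * w 4 - v 4 * w 3 \<noteq> 0"
    using ij(3) sym by auto
  then show ?thesis
  proof cases
    case 1 show ?thesis by (rule dep_gen[of 1 2 3 4, OF _ _ h 1]) auto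
  next
    case 2 show ?thesis by (rule dep_gen[of 1 3 2 4, OF _ _ h 2]) auto
  next
    case 3 show ?thesis by (rule dep_gen[of 1 4 2 3, OF _ _ h 3]) auto
  next
    case 4 show ?thesis by (rule dep_gen[of 2 3 1 4, OF _ _ h 4]) auto
  next
    case 5 show ?thesis by (rule dep_gen[of 2 4 1 3, OF _ _ h 5]) auto
  next
    case 6 show ?thesis by (rule dep_gen[of 3 4 1 2, OF _ _ h 6]) auto
  qed
qed

definition zf :: "('x \<Rightarrow> complex) \<Rightarrow> bool" where "zf f \<longleftrightarrow> (\<forall>x. f x = 0)"
definition indep :: "('x \<Rightarrow> complex) \<Rightarrow> ('x \<Rightarrow> complex) \<Rightarrow> bool" where
  "indep f g \<longleftrightarrow> (\<forall>a b. (\<forall>x. a * f x + b * g x = 0) \<longrightarrow> a = 0 \<and> b = 0)"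

definition good3 :: "('x \<Rightarrow> complex) \<Rightarrow> ('x \<Rightarrow> complex) \<Rightarrow> ('x \<Rightarrow> complex) \<Rightarrow> bool" where
  "good3 f1 f2 f3 \<longleftrightarrow> (zf f1 \<and> zf f2) \<or> (zf f1 \<and> zf f3) \<or> (zf f2 \<and> zf f3) \<or>
     (zf f3 \<and> indep f2 f1) \<or> (zf f2 \<and> indep f3 f1) \<or> (zf f1 \<and> indep f3 f2)"

lemma solve2: assumes "b \<noteq> 0" "a * u + b * v = 0" shows "v = (- a / b) * (u::complex)"
proof -
  have "b * v = - (a * u)" using assms(2) by (simp add: eq_neg_iff_add_eq_0 add.commute)
  then show ?thesis using assms(1) by (simp add: field_simps)
qed
lemma solve3: assumes "\<alpha> \<noteq> 0" "\<alpha> * u + \<beta> * v + \<gamma> * w = 0" "v = k * w"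
  shows "u = (-(\<beta> * k + \<gamma>) / \<alpha>) * (w::complex)"
proof -
  have "\<alpha> * u = - ((\<beta> * k + \<gamma>) * w)" using assms(2,3) by (simp add: eq_neg_iff_add_eq_0 algebra_simps)
  then show ?thesis using assms(1) by (simp add: field_simps)
qed

lemma rowops:
  fixes f1 f2 f3 :: "'x \<Rightarrow> complex"
  assumes nz: "\<alpha> \<noteq> 0 \<or> \<beta> \<noteq> 0 \<or> \<gamma> \<noteq> 0" and dep: "\<forall>x. \<alpha> * f1 x + \<beta> * f2 x + \<gamma> * f3 x = 0"
  shows "\<exists>s z r. good3 (\<lambda>x. f1 x + s * f2 x + r * f3 x) (\<lambda>x. f2 x + z * f3 x) f3"
proof (cases "zf f3")
  case z3: True
  show ?thesis
  proof (cases "indep f2 f1")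
    case True
    then show ?thesis
      by (intro exI[of _ 0]) (use z3 in \<open>auto simp: good3_def\<close>)
  next
    case False
    then obtain a b where ab: "\<forall>x. a * f2 x + b * f1 x = 0" "a \<noteq> 0 \<or> b \<noteq> 0"
      unfolding indep_def by blast
    show ?thesis
    proof (cases "b = 0")
      case True
      then have "zf f2" using ab unfolding zf_def by auto
      then show ?thesis
        by (intro exI[of _ 0]) (use z3 in \<open>auto simp: good3_def\<close>)
    next
      case False
      have "zf (\<lambda>x. f1 x + a / b * f2 x + 0 * f3 x)" unfolding zf_def
      proof
        fix x
        have "b * f1 x + a * f2 x = 0" using ab(1) by (simp add: algebra_simps)
        then show "f1 x + a / b * f2 x + 0 * f3 x = 0" using False
          by (simp add: field_simps)
      qed
      then show ?thesis
        by (intro exI[of _ "a/b"] exI[of _ 0]) (use z3 in \<open>auto simp: good3_def zf_def\<close>)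
    qed
  qed
next
  case nz3: False
  show ?thesis
  proof (cases "\<exists>lam \<kappa>. (\<forall>x. f1 x = lam * f3 x) \<and> (\<forall>x. f2 x = \<kappa> * f3 x)")
    case True
    then obtain lam \<kappa> where lk: "\<forall>x. f1 x = lam * f3 x" "\<forall>x. f2 x = \<kappa> * f3 x" by blast
    show ?thesis
      by (intro exI[of _ 0] exI[of _ "-\<kappa>"] exI[of _ "-lam"]) (use lk in \<open>auto simp: good3_def zf_def\<close>)
  next
    case nprop: False
    show ?thesis
    proof (cases "\<alpha> = 0")
      case False
      have z1: "zf (\<lambda>x. f1 x + \<beta>/\<alpha> * f2 x + \<gamma>/\<alpha> * f3 x)" unfolding zf_def
      proof
        fix x show "f1 x + \<beta>/\<alpha> * f2 x + \<gamma>/\<alpha> * f3 x = 0"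
          using dep False by (simp add: field_simps)
      qed
      have ind: "indep f3 (\<lambda>x. f2 x + 0 * f3 x)" unfolding indep_def
      proof (intro allI impI)
        fix a b assume h: "\<forall>x. a * f3 x + b * (f2 x + 0 * f3 x) = 0"
        show "a = 0 \<and> b = 0"
        proof (rule ccontr)
          assume nab: "\<not> (a = 0 \<and> b = 0)"
          show False
          proof (cases "b = 0")
            case True
            then have "a \<noteq> 0" using nab by simp
            then have "zf f3" using h True unfolding zf_def by simp
            then show False using nz3 by simp
          next
            case bnz: False
            have f2: "f2 x = (- a / b) * f3 x" for x using h bnz solve2[of b a "f3 x" "f2 x"] by simp
            have "f1 x = (-(\<beta> * (- a / b) + \<gamma>) / \<alpha>) * f3 x" for x
              by (rule solve3[OF False dep[rule_format] f2])
            then show False using nprop f2 by blast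
          qed
        qed
      qed
      show ?thesis
        by (intro exI[of _ "\<beta>/\<alpha>"] exI[of _ 0] exI[of _ "\<gamma>/\<alpha>"]) (use z1 ind in \<open>auto simp: good3_def\<close>)
    next
      case a0: True
      show ?thesis
      proof (cases "\<beta> = 0")
        case True
        then have "\<gamma> \<noteq> 0" using nz a0 by simp
        then have "zf f3" using dep a0 True unfolding zf_def by simp
        then show ?thesis using nz3 by simp
      next
        case bnz: False
        have z2: "zf (\<lambda>x. f2 x + \<gamma>/\<beta> * f3 x)" unfolding zf_def
        proof
          fix x show "f2 x + \<gamma>/\<beta> * f3 x = 0"
            using dep a0 bnz by (simp add: field_simps)
        qed
        have ind: "indep f3 (\<lambda>x. f1 x + 0 * f2 x + 0 * f3 x)" unfolding indep_def
        proof (intro allI impI)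
          fix a b assume h: "\<forall>x. a * f3 x + b * (f1 x + 0 * f2 x + 0 * f3 x) = 0"
          show "a = 0 \<and> b = 0"
          proof (rule ccontr)
            assume nab: "\<not> (a = 0 \<and> b = 0)"
            show False
            proof (cases "b = 0")
              case True
              then have "a \<noteq> 0" using nab by simp
              then have "zf f3" using h True unfolding zf_def by simp
              then show False using nz3 by simp
            next
              case b2: False
              have f1: "f1 x = (- a / b) * f3 x" for x using h b2 solve2[of b a "f3 x" "f1 x"] by simp
              have "f2 x = (- \<gamma> / \<beta>) * f3 x" for x
                using dep a0 bnz solve2[of \<beta> \<gamma> "f3 x" "f2 x"] by (simp add: add.commute)
              then show False using nprop f1 by blast
            qed
          qed
        qed
        show ?thesis
          by (intro exI[of _ 0] exI[of _ "\<gamma>/\<beta>"] exI[of _ 0]) (use z2 ind in \<open>auto simp: good3_def\<close>)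
      qed
    qed
  qed
qed

definition hmat :: "nat \<Rightarrow> nat \<Rightarrow> nat \<Rightarrow> complex \<Rightarrow> complex \<Rightarrow> complex \<Rightarrow> nat \<Rightarrow> nat \<Rightarrow> complex" where
  "hmat c1 c2 c3 x y z i j = (if i = j then 1 else 0) + (if i = c2 \<and> j = c1 then x else 0)
     + (if i = c3 \<and> j = c1 then y else 0) + (if i = c3 \<and> j = c2 then z else 0)"

definition e3 :: "nat \<Rightarrow> nat \<Rightarrow> nat \<Rightarrow> complex \<Rightarrow> complex \<Rightarrow> complex \<Rightarrow> nat \<Rightarrow> complex" where
  "e3 c1 c2 c3 a1 a2 a3 j = (if j = c1 then a1 else 0) + (if j = c2 then a2 else 0) + (if j = c3 then a3 else 0)"

lemma hmat_unip:
  assumes "c1 < c2" "c2 < c3"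
  shows "unipotent_lower 5 (hmat c1 c2 c3 x y z)"
  using assms unfolding unipotent_lower_def hmat_def by auto

lemma hmat_rows:
  assumes "c1 < c2" "c2 < c3"
  shows "hmat c1 c2 c3 x y z c1 = e3 c1 c2 c3 1 0 0"
    "hmat c1 c2 c3 x y z c2 = e3 c1 c2 c3 x 1 0"
    "hmat c1 c2 c3 x y z c3 = e3 c1 c2 c3 y z 1"
  using assms unfolding hmat_def e3_def by (auto simp: fun_eq_iff)

lemma sum_if_eq':
  assumes "c \<in> {1..5}"
  shows "(\<Sum>j=1..5. X j * (if j = c then x else 0)) = X (c::nat) * (x :: complex)"
  using sum_if_eq[OF assms, of x X] by (simp add: mult.commute)

lemma rs_e3:
  assumes "c1 \<in> {1..5}" "c2 \<in> {1..5}" "c3 \<in> {1..5}"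
  shows "(\<Sum>j=1..5. X j * e3 c1 c2 c3 a1 a2 a3 j) = X c1 * a1 + X c2 * a2 + X c3 * (a3::complex)"
  unfolding e3_def by (simp only: distrib_left sum.distrib sum_if_eq' assms)

lemma bil_e3:
  assumes "c1 \<in> {1..5}" "c2 \<in> {1..5}" "c3 \<in> {1..5}"
  shows "bil Y (e3 c1 c2 c3 a1 a2 a3) (e3 c1 c2 c3 b1 b2 b3) =
     a1 * (Y c1 c1 * b1 + Y c1 c2 * b2 + Y c1 c3 * b3) + a2 * (Y c2 c1 * b1 + Y c2 c2 * b2 + Y c2 c3 * b3)
     + a3 * (Y c3 c1 * b1 + Y c3 c2 * b2 + Y c3 c3 * b3)"
proof -
  have "bil Y (e3 c1 c2 c3 a1 a2 a3) (e3 c1 c2 c3 b1 b2 b3) =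
      (\<Sum>i=1..5. (\<Sum>j=1..5. Y i j * e3 c1 c2 c3 b1 b2 b3 j) * e3 c1 c2 c3 a1 a2 a3 i)"
    unfolding bil_def by (simp add: sum_distrib_left sum_distrib_right algebra_simps)
  also have "\<dots> = (\<Sum>i=1..5. (Y i c1 * b1 + Y i c2 * b2 + Y i c3 * b3) * e3 c1 c2 c3 a1 a2 a3 i)"
    by (simp only: rs_e3[OF assms])
  also have "\<dots> = a1 * (Y c1 c1 * b1 + Y c1 c2 * b2 + Y c1 c3 * b3) + a2 * (Y c2 c1 * b1 + Y c2 c2 * b2 + Y c2 c3 * b3)
     + a3 * (Y c3 c1 * b1 + Y c3 c2 * b2 + Y c3 c3 * b3)"
    by (simp only: rs_e3[OF assms, of "\<lambda>i. Y i c1 * b1 + Y i c2 * b2 + Y i c3 * b3"]) (simp add: algebra_simps)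
  finally show ?thesis .
qed

lemma conj_hmat:
  assumes o: "c1 < c2" "c2 < c3" and c: "c1 \<in> {1..5}" "c2 \<in> {1..5}" "c3 \<in> {1..5}"
    and Y: "alternating5 Y"
  shows "conj5 (hmat c1 c2 c3 x y z) Y c1 c2 = Y c1 c2"
    "conj5 (hmat c1 c2 c3 x y z) Y c1 c3 = Y c1 c3 + z * Y c1 c2"
    "conj5 (hmat c1 c2 c3 x y z) Y c2 c3 = Y c2 c3 + x * Y c1 c3 + (x * z - y) * Y c1 c2"
proof -
  have d: "Y c1 c1 = 0" "Y c2 c2 = 0" "Y c3 c3 = 0" using Y c unfolding alternating5_def by blast+
  have s: "Y c2 c1 = - Y c1 c2" "Y c3 c1 = - Y c1 c3" "Y c3 c2 = - Y c2 c3"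
    using Y c unfolding alternating5_def by blast+
  show "conj5 (hmat c1 c2 c3 x y z) Y c1 c2 = Y c1 c2"
    "conj5 (hmat c1 c2 c3 x y z) Y c1 c3 = Y c1 c3 + z * Y c1 c2"
    "conj5 (hmat c1 c2 c3 x y z) Y c2 c3 = Y c2 c3 + x * Y c1 c3 + (x * z - y) * Y c1 c2"
    unfolding conj5_bil hmat_rows[OF o] bil_e3[OF c] d s by (simp_all add: algebra_simps)
qed

lemma conj_hmat_col:
  assumes o: "c1 < c2" "c2 < c3" and c: "c1 \<in> {1..5}" "c2 \<in> {1..5}" "c3 \<in> {1..5}"
    and X: "\<forall>k\<in>{1..5}. X k c1 = 0 \<and> X k c2 = 0 \<and> X k c3 = 0"
    and d: "d \<in> {c1, c2, c3}"
  shows "conj5 (hmat c1 c2 c3 x y z) X i d = 0"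
proof -
  obtain b1 b2 b3 where hd: "hmat c1 c2 c3 x y z d = e3 c1 c2 c3 b1 b2 b3"
    using hmat_rows[OF o] d by blast
  have "conj5 (hmat c1 c2 c3 x y z) X i d = (\<Sum>k=1..5. hmat c1 c2 c3 x y z i k * (\<Sum>l=1..5. X k l * e3 c1 c2 c3 b1 b2 b3 l))"
    unfolding conj5_def hd by (simp add: sum_distrib_left algebra_simps)
  also have "\<dots> = (\<Sum>k=1..5. hmat c1 c2 c3 x y z i k * (X k c1 * b1 + X k c2 * b2 + X k c3 * b3))"
    by (simp only: rs_e3[OF c])
  also have "\<dots> = 0" using X by (intro sum.neutral) auto
  finally show ?thesis .
qed

lemma conj5_lin4:
  "conj5 g (\<lambda>i j. \<Sum>l=1..4. c l * X l i j) i j = (\<Sum>l=1..4. c l * conj5 g (X l) i j)"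
proof -
  have "conj5 g (\<lambda>i j. \<Sum>l=1..4. c l * X l i j) i j = (\<Sum>a=1..5. \<Sum>b=1..5. \<Sum>l=1..4. c l * (g i a * X l a b * g j b))"
    unfolding conj5_def by (simp add: sum_distrib_left sum_distrib_right algebra_simps)
  also have "\<dots> = (\<Sum>a=1..5. \<Sum>l=1..4. \<Sum>b=1..5. c l * (g i a * X l a b * g j b))"
    by (rule sum.cong[OF refl], rule sum.swap)
  also have "\<dots> = (\<Sum>l=1..4. \<Sum>a=1..5. \<Sum>b=1..5. c l * (g i a * X l a b * g j b))"
    by (rule sum.swap)
  also have "\<dots> = (\<Sum>l=1..4. c l * conj5 g (X l) i j)"
    unfolding conj5_def by (simp add: sum_distrib_left)
  finally show ?thesis .
qed

definition mmul :: "(nat \<Rightarrow> nat \<Rightarrow> complex) \<Rightarrow> (nat \<Rightarrow> nat \<Rightarrow> complex) \<Rightarrow> nat \<Rightarrow> nat \<Rightarrow> complex" where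
  "mmul h g i j = (\<Sum>c=1..5. h i c * g c j)"

lemma conj5_mmul: "conj5 (mmul h g) X i j = conj5 h (conj5 g X) i j"
proof -
  have "conj5 (mmul h g) X i j = (\<Sum>a=1..5. \<Sum>b=1..5. \<Sum>c=1..5. \<Sum>d=1..5. h i c * h j d * (g c a * X a b * g d b))"
    unfolding conj5_def mmul_def by (simp add: sum_distrib_left sum_distrib_right algebra_simps)
  also have "\<dots> = (\<Sum>a=1..5. \<Sum>c=1..5. \<Sum>b=1..5. \<Sum>d=1..5. h i c * h j d * (g c a * X a b * g d b))"
    by (rule sum.cong[OF refl], rule sum.swap)
  also have "\<dots> = (\<Sum>c=1..5. \<Sum>a=1..5. \<Sum>b=1..5. \<Sum>d=1..5. h i c * h j d * (g c a * X a b * g d b))"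
    by (rule sum.swap)
  also have "\<dots> = (\<Sum>c=1..5. \<Sum>a=1..5. \<Sum>d=1..5. \<Sum>b=1..5. h i c * h j d * (g c a * X a b * g d b))"
    by (rule sum.cong[OF refl], rule sum.cong[OF refl], rule sum.swap)
  also have "\<dots> = (\<Sum>c=1..5. \<Sum>d=1..5. \<Sum>a=1..5. \<Sum>b=1..5. h i c * h j d * (g c a * X a b * g d b))"
    by (rule sum.cong[OF refl], rule sum.swap)
  also have "\<dots> = conj5 h (conj5 g X) i j"
    unfolding conj5_def by (simp add: sum_distrib_left sum_distrib_right algebra_simps)
  finally show ?thesis .
qed

lemma mmul_unip:
  assumes "unipotent_lower 5 h" "unipotent_lower 5 g"
  shows "unipotent_lower 5 (mmul h g)"
  unfolding unipotent_lower_def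
proof (intro ballI conjI impI)
  fix i j :: nat assume i: "i \<in> {1..5}" and j: "j \<in> {1..5}"
  have H: "h i c = 0" if "c \<in> {1..5}" "i < c" for c using assms(1) i that unfolding unipotent_lower_def by blast
  have G: "g c j = 0" if "c \<in> {1..5}" "c < j" for c using assms(2) j that unfolding unipotent_lower_def by blast
  have Hd: "h i i = 1" using assms(1) i unfolding unipotent_lower_def by blast
  have Gd: "g i i = 1" using assms(2) i unfolding unipotent_lower_def by blast
  {
    assume ij: "i < j"
    show "mmul h g i j = 0" unfolding mmul_def
    proof (rule sum.neutral, rule ballI)
      fix c :: nat assume c: "c \<in> {1..5}"
      show "h i c * g c j = 0"
      proof (cases "i < c")
        case True then show ?thesis using H[OF c] by simp
      next
        case False then have "c < j" using ij by simp
        then show ?thesis using G[OF c] by simp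
      qed
    qed
  }
  {
    assume ij: "i = j"
    have "mmul h g i j = (\<Sum>c=1..5. if c = i then 1 else 0)" unfolding mmul_def
    proof (rule sum.cong[OF refl])
      fix c :: nat assume c: "c \<in> {1..5}"
      show "h i c * g c j = (if c = i then 1 else 0)"
      proof (cases "c = i")
        case True then show ?thesis using Hd Gd ij by simp
      next
        case False
        then have "i < c \<or> c < j" using ij by auto
        then show ?thesis using H[OF c] G[OF c] False by auto
      qed
    qed
    also have "\<dots> = 1" using i by simp
    finally show "mmul h g i j = 1" .
  }
qed

lemma act_eq: "act g4 g5 A k i j = (\<Sum>l=1..4. g4 k l * conj5 g5 (A l) i j)"
  unfolding act_def conj5_def by simp

lemma linform_act:
  "linform (act g4 g5 A) c d x = conj5 g5 (\<lambda>i j. linform A i j (\<lambda>l. \<Sum>k=1..4. g4 k l * x k)) c d"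
proof -
  have "linform (act g4 g5 A) c d x = (\<Sum>k=1..4. \<Sum>l=1..4. x k * g4 k l * conj5 g5 (A l) c d)"
    unfolding linform_def act_eq by (simp add: sum_distrib_left sum_distrib_right algebra_simps)
  also have "\<dots> = (\<Sum>l=1..4. \<Sum>k=1..4. x k * g4 k l * conj5 g5 (A l) c d)"
    by (rule sum.swap)
  also have "\<dots> = (\<Sum>l=1..4. (\<Sum>k=1..4. g4 k l * x k) * conj5 g5 (A l) c d)"
    by (simp add: sum_distrib_right sum_distrib_left algebra_simps)
  also have "\<dots> = conj5 g5 (\<lambda>i j. \<Sum>l=1..4. (\<Sum>k=1..4. g4 k l * x k) * A l i j) c d"
    by (rule conj5_lin4[symmetric])
  also have "\<dots> = conj5 g5 (\<lambda>i j. linform A i j (\<lambda>l. \<Sum>k=1..4. g4 k l * x k)) c d"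
    unfolding linform_def by (simp add: mult.commute)
  finally show ?thesis .
qed

lemma conj5_alt:
  assumes X: "alternating5 X"
  shows "alternating5 (conj5 g X)"
proof -
  have sw: "conj5 g X j i = - conj5 g X i j" for i j
  proof -
    have "conj5 g X j i = (\<Sum>b=1..5. \<Sum>a=1..5. g j a * X a b * g i b)"
      unfolding conj5_def by (rule sum.swap)
    also have "\<dots> = (\<Sum>a=1..5. \<Sum>b=1..5. - (g i a * X a b * g j b))"
    proof (rule sum.cong[OF refl], rule sum.cong[OF refl])
      fix a b :: nat assume a: "a \<in> {1..5}" and b: "b \<in> {1..5}"
      have "X b a = - X a b" using X a b unfolding alternating5_def by blast
      then show "g j b * X b a * g i a = - (g i a * X a b * g j b)" by simp
    qed
    also have "\<dots> = - conj5 g X i j" unfolding conj5_def by (simp add: sum_negf)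
    finally show ?thesis .
  qed
  show ?thesis unfolding alternating5_def
  proof (intro conjI ballI)
    fix i :: nat show "conj5 g X i i = 0" using sw[of i i] by simp
  next
    fix i j :: nat show "conj5 g X j i = - conj5 g X i j" by (rule sw)
  qed
qed

lemma act_mmul:
  "act g4 (mmul h g) A k i j = conj5 h (act g4 g A k) i j"
proof -
  have "act g4 (mmul h g) A k i j = (\<Sum>l=1..4. g4 k l * conj5 h (conj5 g (A l)) i j)"
    unfolding act_eq conj5_mmul ..
  also have "\<dots> = conj5 h (\<lambda>a b. \<Sum>l=1..4. g4 k l * conj5 g (A l) a b) i j"
    by (rule conj5_lin4[symmetric])
  also have "\<dots> = conj5 h (act g4 g A k) i j"
    unfolding act_eq ..
  finally show ?thesis .
qed

lemma linform_conj:
  "linform (\<lambda>k. conj5 h (B k)) c d x = conj5 h (\<lambda>i j. linform B i j x) c d"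
  unfolding linform_def using conj5_lin4[of h x B c d] by (simp add: mult.commute)

lemma final_pick:
  fixes B :: "nat \<Rightarrow> nat \<Rightarrow> nat \<Rightarrow> complex"
  assumes dist: "c1 \<noteq> c2" "c1 \<noteq> c3" "c2 \<noteq> c3"
    and alt: "\<And>x i j. i \<in> {c1,c2,c3} \<Longrightarrow> j \<in> {c1,c2,c3} \<Longrightarrow> linform B j i x = - linform B i j x"
    and g: "good3 (linform B c2 c3) (linform B c1 c3) (linform B c1 c2)"
  shows "\<exists>I J L. {I,J,L} = {c1,c2,c3} \<and> I \<noteq> J \<and> I \<noteq> L \<and> J \<noteq> L \<and>
     ((\<forall>x. linform B I L x = 0) \<and> (\<forall>x. linform B J L x = 0)
      \<or> (\<forall>x. linform B I J x = 0) \<and>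
        (\<forall>a b. (\<forall>x. a * linform B I L x + b * linform B J L x = 0) \<longrightarrow> a = 0 \<and> b = 0))"
proof -
  have s21: "linform B c2 c1 x = - linform B c1 c2 x" for x by (rule alt) auto
  have s31: "linform B c3 c1 x = - linform B c1 c3 x" for x by (rule alt) auto
  have s32: "linform B c3 c2 x = - linform B c2 c3 x" for x by (rule alt) auto
  have negind: "indep (\<lambda>x. - f x) (\<lambda>x. - g x) \<longleftrightarrow> indep f g" for f g :: "(nat \<Rightarrow> complex) \<Rightarrow> complex"
    unfolding indep_def
  proof (intro iffI allI impI)
    fix a b assume H: "\<forall>a b. (\<forall>x. a * - f x + b * - g x = 0) \<longrightarrow> a = 0 \<and> b = 0"
      and h: "\<forall>x. a * f x + b * g x = 0"
    then have "\<forall>x. (-a) * - f x + (-b) * - g x = 0" by simp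
    then show "a = 0 \<and> b = 0" using H[rule_format, of "-a" "-b"] by simp
  next
    fix a b assume H: "\<forall>a b. (\<forall>x. a * f x + b * g x = 0) \<longrightarrow> a = 0 \<and> b = 0"
      and h: "\<forall>x. a * - f x + b * - g x = 0"
    then have "\<forall>x. (-a) * f x + (-b) * g x = 0" by simp
    then show "a = 0 \<and> b = 0" using H[rule_format, of "-a" "-b"] by simp
  qed
  have negind1: "indep f (\<lambda>x. - g x) \<longleftrightarrow> indep f g" for f g :: "(nat \<Rightarrow> complex) \<Rightarrow> complex"
    unfolding indep_def
  proof (intro iffI allI impI)
    fix a b assume H: "\<forall>a b. (\<forall>x. a * f x + b * - g x = 0) \<longrightarrow> a = 0 \<and> b = 0"
      and h: "\<forall>x. a * f x + b * g x = 0"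
    then have "\<forall>x. a * f x + (-b) * - g x = 0" by simp
    then show "a = 0 \<and> b = 0" using H[rule_format, of "a" "-b"] by simp
  next
    fix a b assume H: "\<forall>a b. (\<forall>x. a * f x + b * g x = 0) \<longrightarrow> a = 0 \<and> b = 0"
      and h: "\<forall>x. a * f x + b * - g x = 0"
    then have "\<forall>x. a * f x + (-b) * g x = 0" by simp
    then show "a = 0 \<and> b = 0" using H[rule_format, of "a" "-b"] by simp
  qed
  have z21: "zf (linform B c2 c1) \<longleftrightarrow> zf (linform B c1 c2)" unfolding zf_def using s21 by simp
  have z31: "zf (linform B c3 c1) \<longleftrightarrow> zf (linform B c1 c3)" unfolding zf_def using s31 by simp
  have z32: "zf (linform B c3 c2) \<longleftrightarrow> zf (linform B c2 c3)" unfolding zf_def using s32 by simp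
  have e21: "linform B c2 c1 = (\<lambda>x. - linform B c1 c2 x)" using s21 by (simp add: fun_eq_iff)
  have e31: "linform B c3 c1 = (\<lambda>x. - linform B c1 c3 x)" using s31 by (simp add: fun_eq_iff)
  have e32: "linform B c3 c2 = (\<lambda>x. - linform B c2 c3 x)" using s32 by (simp add: fun_eq_iff)
  have "\<exists>I J L. {I,J,L} = {c1,c2,c3} \<and> I \<noteq> J \<and> I \<noteq> L \<and> J \<noteq> L \<and>
     (zf (linform B I L) \<and> zf (linform B J L) \<or> zf (linform B I J) \<and> indep (linform B I L) (linform B J L))"
  proof -
    from g consider
      (a) "zf (linform B c2 c3)" "zf (linform B c1 c3)"
    | (b) "zf (linform B c2 c3)" "zf (linform B c1 c2)"
    | (c) "zf (linform B c1 c3)" "zf (linform B c1 c2)"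
    | (d) "zf (linform B c1 c2)" "indep (linform B c1 c3) (linform B c2 c3)"
    | (e) "zf (linform B c1 c3)" "indep (linform B c1 c2) (linform B c2 c3)"
    | (f) "zf (linform B c2 c3)" "indep (linform B c1 c2) (linform B c1 c3)"
      unfolding good3_def by blast
    then show ?thesis
    proof cases
      case a then show ?thesis
        by (intro exI[of _ c1] exI[of _ c2] exI[of _ c3]) (use dist in blast)
    next
      case b then show ?thesis
        by (intro exI[of _ c1] exI[of _ c3] exI[of _ c2]) (use dist z32 in blast)
    next
      case c then show ?thesis
        by (intro exI[of _ c2] exI[of _ c3] exI[of _ c1]) (use dist z21 z31 in blast)
    next
      case d then show ?thesis
        by (intro exI[of _ c1] exI[of _ c2] exI[of _ c3]) (use dist in blast)
    next
      case e
      have "indep (linform B c1 c2) (linform B c3 c2)"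
        unfolding e32 negind1 by (rule e(2))
      then show ?thesis using e(1)
        by (intro exI[of _ c1] exI[of _ c3] exI[of _ c2]) (use dist in blast)
    next
      case f
      have "indep (linform B c2 c1) (linform B c3 c1)"
        unfolding e21 e31 negind by (rule f(2))
      then show ?thesis using f(1) z32
        by (intro exI[of _ c2] exI[of _ c3] exI[of _ c1]) (use dist in blast)
    qed
  qed
  then show ?thesis unfolding zf_def indep_def .
qed

lemma compl3:
  assumes "a \<in> {1..5}" "b \<in> {1..5}" "a < (b::nat)"
  shows "\<exists>c1 c2 c3. c1 < c2 \<and> c2 < c3 \<and> c1 \<in> {1..5} \<and> c2 \<in> {1..5} \<and> c3 \<in> {1..5} \<and>
     c1 \<notin> {a,b} \<and> c2 \<notin> {a,b} \<and> c3 \<notin> {a,b}"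
proof -
  have "(a,b) \<in> {(1,2),(1,3),(1,4),(1,5),(2,3),(2,4),(2,5),(3,4),(3,5),(4,5)}"
    using assms by simp presburger
  then consider "a=1" "b=2" | "a=1" "b=3" | "a=1" "b=4" | "a=1" "b=5" | "a=2" "b=3" | "a=2" "b=4"
    | "a=2" "b=5" | "a=3" "b=4" | "a=3" "b=5" | "a=4" "b=5" by auto
  then show ?thesis
    by cases (rule exI[of _ 1] exI[of _ 2] exI[of _ 3] exI[of _ 4] exI[of _ 5], simp)+
qed

lemma conj5_div: "conj5 g (\<lambda>a b. X a b / c) i j = conj5 g X i j / c"
  unfolding conj5_def by (simp add: sum_divide_distrib)

lemma conj5_zero: "(\<forall>a\<in>{1..5}. \<forall>b\<in>{1..5}. X a b = 0) \<Longrightarrow> conj5 g X i j = 0"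
  unfolding conj5_def by (intro sum.neutral ballI) simp

theorem lemma4p5:
  fixes A :: "nat \<Rightarrow> nat \<Rightarrow> nat \<Rightarrow> complex" and p :: "nat \<Rightarrow> complex"
  assumes alt: "\<forall>k\<in>{1..4}. alternating5 (A k)"
    and pt: "on_pfaff_scheme A p"
    and tan: "tangent_pos_dim A p"
  shows "\<exists>g4 g5 K I J L. unipotent_lower 4 g4 \<and> unipotent_lower 5 g5 \<and>
     K \<in> {1..4} \<and> I \<in> {1..5} \<and> J \<in> {1..5} \<and> L \<in> {1..5} \<and>
     I \<noteq> J \<and> I \<noteq> L \<and> J \<noteq> L \<and>
     (let B = act g4 g5 A in
       (\<forall>i\<in>{1..5}. \<forall>j\<in>{1..5}. B K i j = 0)
       \<or>
       ((\<forall>k\<in>{1..4}. \<exists>i\<in>{1..5}. \<exists>j\<in>{1..5}. B k i j \<noteq> 0) \<and>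
        (\<forall>i\<in>{1..5}. B K i I = 0 \<and> B K i J = 0 \<and> B K i L = 0) \<and>
        ((\<forall>x. linform B I L x = 0) \<and> (\<forall>x. linform B J L x = 0)
         \<or>
         (\<forall>x. linform B I J x = 0) \<and>
         (\<forall>a b. (\<forall>x. a * linform B I L x + b * linform B J L x = 0) \<longrightarrow> a = 0 \<and> b = 0))))"
proof -
  define M where "M = (\<lambda>i j. linform A i j p)"
  have altM: "alternating5 M" unfolding M_def by (rule alt_linform[OF alt])
  note sp = scheme_phi[OF pt, folded M_def]
  have PM: "phi M M i j k l = 0" if "i \<in> {1..5}" "j \<in> {1..5}" "k \<in> {1..5}" "l \<in> {1..5}" for i j k l
    by (rule phi_zero[OF altM altM sp that])
  define S where "S = {k\<in>{1..4::nat}. p k \<noteq> 0}"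
  have Sfin: "finite S" and Sne: "S \<noteq> {}" using pt unfolding S_def on_pfaff_scheme_def by auto
  define K where "K = Max S"
  have KS: "K \<in> S" unfolding K_def using Sfin Sne by (rule Max_in)
  then have K1: "K \<in> {1..4}" and pK: "p K \<noteq> 0" unfolding S_def by auto
  have pz: "p l = 0" if "l \<in> {1..4}" "K < l" for l
  proof (rule ccontr)
    assume "p l \<noteq> 0" then have "l \<in> S" using that unfolding S_def by auto
    then have "l \<le> K" unfolding K_def using Sfin by simp
    then show False using that by simp
  qed
  define g4 where "g4 = (\<lambda>k l. if k = K then (if l \<le> K then p l / p K else 0) else (if k = l then (1::complex) else 0))"
  have u4: "unipotent_lower 4 g4" unfolding unipotent_lower_def g4_def using pK by auto
  have rowK: "(\<Sum>l=1..4. g4 K l * X l) = (\<Sum>l=1..4. X l * p l) / p K" for X :: "nat \<Rightarrow> complex"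
  proof -
    have "(\<Sum>l=1..4. g4 K l * X l) = (\<Sum>l=1..4. X l * p l / p K)"
    proof (rule sum.cong[OF refl])
      fix l :: nat assume l: "l \<in> {1..4}"
      show "g4 K l * X l = X l * p l / p K"
        using pz[OF l] unfolding g4_def by auto
    qed
    then show ?thesis by (simp add: sum_divide_distrib)
  qed
  have BK: "act g4 g5 A K i j = conj5 g5 (\<lambda>a b. M a b / p K) i j" for g5 i j
  proof -
    have "act g4 g5 A K i j = conj5 g5 (\<lambda>a b. \<Sum>l=1..4. g4 K l * A l a b) i j"
      unfolding act_eq by (rule conj5_lin4[symmetric])
    also have "\<dots> = conj5 g5 (\<lambda>a b. M a b / p K) i j"
      unfolding rowK M_def linform_def ..
    finally show ?thesis .
  qed
  show ?thesis
  proof (cases "\<forall>a\<in>{1..5}. \<forall>b\<in>{1..5}. M a b = 0")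
    case True
    define g5 where "g5 = (\<lambda>i j::nat. if i = j then (1::complex) else 0)"
    have u5: "unipotent_lower 5 g5" unfolding unipotent_lower_def g5_def by auto
    have "act g4 g5 A K i j = 0" for i j
      unfolding BK by (rule conj5_zero) (use True in simp)
    then show ?thesis
      by (intro exI[of _ g4] exI[of _ g5] exI[of _ K] exI[of _ 1] exI[of _ 2] exI[of _ 3])
        (use u4 u5 K1 in \<open>simp add: Let_def\<close>)
  next
    case False
    then have nz: "\<exists>i\<in>{1..5}. \<exists>j\<in>{1..5}. M i j \<noteq> 0" by blast
    obtain a b g0 where a: "a \<in> {1..5}" and b: "b \<in> {1..5}" and ab: "a < b"
      and u0: "unipotent_lower 5 g0" and Mab: "M a b \<noteq> 0"
      and gM: "\<forall>i\<in>{1..5}. \<forall>j\<in>{1..5}. conj5 g0 M i j =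
        M a b * ((if i = a \<and> j = b then 1 else 0) - (if i = b \<and> j = a then 1 else 0))"
      and gN: "\<forall>N. (\<forall>k\<in>{1..5}. \<forall>l\<in>{1..5}. phi M N a b k l = 0) \<longrightarrow>
       (\<forall>c\<in>{1..5}. \<forall>d\<in>{1..5}. c \<noteq> a \<longrightarrow> c \<noteq> b \<longrightarrow> d \<noteq> a \<longrightarrow> d \<noteq> b \<longrightarrow> conj5 g0 N c d = 0)"
      using normal_form[OF altM PM nz] by blast
    obtain c1 c2 c3 where c: "c1 < c2" "c2 < c3" "c1 \<in> {1..5}" "c2 \<in> {1..5}" "c3 \<in> {1..5}"
      "c1 \<notin> {a,b}" "c2 \<notin> {a,b}" "c3 \<notin> {a,b}"
      using compl3[OF a b ab] by blast
    obtain v w where tv: "cone_tangent A p v" and tw: "cone_tangent A p w"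
      and vw: "\<forall>a b. (\<forall>k\<in>{1..4}. a * v k + b * w k = 0) \<longrightarrow> a = 0 \<and> b = 0"
      using tan unfolding tangent_pos_dim_def by blast
    define G where "G = (\<lambda>c d l. conj5 g0 (A l) c d)"
    have tang: "(\<Sum>l=1..4. G c d l * v l) = 0" if "cone_tangent A p v" "c \<in> {1..5}" "d \<in> {1..5}"
      "c \<notin> {a,b}" "d \<notin> {a,b}" for v c d
    proof -
      define N where "N = (\<lambda>i j. linform A i j v)"
      have altN: "alternating5 N" unfolding N_def by (rule alt_linform[OF alt])
      note tp = tangent_phi[OF that(1), folded M_def N_def]
      have "\<forall>k\<in>{1..5}. \<forall>l\<in>{1..5}. phi M N a b k l = 0"
        using phi_zero[OF altM altN tp] a b by blast
      then have "conj5 g0 N c d = 0" using gN that(2-5) by blast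
      moreover have "conj5 g0 N c d = (\<Sum>l=1..4. v l * conj5 g0 (A l) c d)"
        unfolding N_def linform_def using conj5_lin4[of g0 v A c d] by (simp add: mult.commute)
      ultimately show ?thesis unfolding G_def by (simp add: mult.commute)
    qed
    obtain \<alpha> \<beta> \<gamma> where abg: "\<alpha> \<noteq> 0 \<or> \<beta> \<noteq> 0 \<or> \<gamma> \<noteq> 0"
      and dl: "\<forall>q\<in>{1..4}. \<alpha> * G c2 c3 q + \<beta> * G c1 c3 q + \<gamma> * G c1 c2 q = 0"
      using dep3[of "G c2 c3" v w "G c1 c3" "G c1 c2", OF
          tang[OF tv] tang[OF tw] tang[OF tv] tang[OF tw] tang[OF tv] tang[OF tw] vw] c
      by auto
    define B0 where "B0 = act g4 g0 A"
    have lfB0: "linform B0 c d x = (\<Sum>l=1..4. (\<Sum>k=1..4. g4 k l * x k) * G c d l)" for c d x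
    proof -
      have "linform B0 c d x = conj5 g0 (\<lambda>i j. \<Sum>l=1..4. (\<Sum>k=1..4. g4 k l * x k) * A l i j) c d"
        unfolding B0_def linform_act by (simp add: linform_def mult.commute)
      also have "\<dots> = (\<Sum>l=1..4. (\<Sum>k=1..4. g4 k l * x k) * G c d l)"
        unfolding G_def by (rule conj5_lin4)
      finally show ?thesis .
    qed
    have depB0: "\<forall>x. \<alpha> * linform B0 c2 c3 x + \<beta> * linform B0 c1 c3 x + \<gamma> * linform B0 c1 c2 x = 0"
    proof
      fix x
      have "\<alpha> * linform B0 c2 c3 x + \<beta> * linform B0 c1 c3 x + \<gamma> * linform B0 c1 c2 x =
        (\<Sum>l=1..4. (\<Sum>k=1..4. g4 k l * x k) * (\<alpha> * G c2 c3 l + \<beta> * G c1 c3 l + \<gamma> * G c1 c2 l))"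
        unfolding lfB0 by (simp add: sum_distrib_left sum.distrib algebra_simps)
      also have "\<dots> = 0" using dl by (intro sum.neutral ballI) simp
      finally show "\<alpha> * linform B0 c2 c3 x + \<beta> * linform B0 c1 c3 x + \<gamma> * linform B0 c1 c2 x = 0" .
    qed
    obtain s z r where gd: "good3 (\<lambda>x. linform B0 c2 c3 x + s * linform B0 c1 c3 x + r * linform B0 c1 c2 x)
        (\<lambda>x. linform B0 c1 c3 x + z * linform B0 c1 c2 x) (linform B0 c1 c2)"
      using rowops[OF abg depB0] by blast
    define h where "h = hmat c1 c2 c3 s (s * z - r) z"
    define g5 where "g5 = mmul h g0"
    have u5: "unipotent_lower 5 g5" unfolding g5_def h_def
      by (rule mmul_unip[OF hmat_unip[OF c(1,2)] u0])
    define B where "B = act g4 g5 A"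
    have Beq: "B = (\<lambda>k. conj5 h (B0 k))"
      unfolding B_def B0_def g5_def by (simp add: fun_eq_iff act_mmul)
    have altB0: "alternating5 (B0 k)" if "k \<in> {1..4}" for k
    proof -
      have "B0 k = conj5 g0 (\<lambda>a b. linform A a b (g4 k))"
      proof (rule ext, rule ext)
        fix i j
        have "B0 k i j = conj5 g0 (\<lambda>a b. \<Sum>l=1..4. g4 k l * A l a b) i j"
          unfolding B0_def act_eq by (rule conj5_lin4[symmetric])
        then show "B0 k i j = conj5 g0 (\<lambda>a b. linform A a b (g4 k)) i j"
          by (simp add: linform_def mult.commute)
      qed
      then show ?thesis using conj5_alt[OF alt_linform[OF alt]] by simp
    qed
    have altB: "\<forall>k\<in>{1..4}. alternating5 (B k)" unfolding Beq using altB0 conj5_alt by blast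
    have altY: "alternating5 (\<lambda>i j. linform B0 i j x)" for x by (rule alt_linform) (use altB0 in blast)
    have lfB: "linform B c d x = conj5 h (\<lambda>i j. linform B0 i j x) c d" for c d x
      unfolding Beq by (rule linform_conj)
    have f3: "linform B c1 c2 = linform B0 c1 c2"
      unfolding lfB h_def using conj_hmat(1)[OF c(1-5) altY] by (simp add: fun_eq_iff)
    have f2: "linform B c1 c3 = (\<lambda>x. linform B0 c1 c3 x + z * linform B0 c1 c2 x)"
      unfolding lfB h_def using conj_hmat(2)[OF c(1-5) altY] by (simp add: fun_eq_iff)
    have f1: "linform B c2 c3 = (\<lambda>x. linform B0 c2 c3 x + s * linform B0 c1 c3 x + r * linform B0 c1 c2 x)"
    proof (rule ext)
      fix x
      have "conj5 h (\<lambda>i j. linform B0 i j x) c2 c3 = linform B0 c2 c3 x + s * linform B0 c1 c3 x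
         + (s * z - (s * z - r)) * linform B0 c1 c2 x"
        unfolding h_def by (rule conj_hmat(3)[OF c(1-5) altY])
      then show "linform B c2 c3 x = linform B0 c2 c3 x + s * linform B0 c1 c3 x + r * linform B0 c1 c2 x"
        unfolding lfB by simp
    qed
    have gB: "good3 (linform B c2 c3) (linform B c1 c3) (linform B c1 c2)"
      using gd unfolding f1 f2 f3 .
    have altlf: "linform B j i x = - linform B i j x" if "i \<in> {c1,c2,c3}" "j \<in> {c1,c2,c3}" for x i j
    proof -
      have "alternating5 (\<lambda>i j. linform B i j x)" by (rule alt_linform[OF altB])
      moreover have "i \<in> {1..5}" "j \<in> {1..5}" using that c by auto
      ultimately show ?thesis unfolding alternating5_def by blast
    qed
    obtain I J L where IJL: "{I,J,L} = {c1,c2,c3}" "I \<noteq> J" "I \<noteq> L" "J \<noteq> L"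
      and fin: "(\<forall>x. linform B I L x = 0) \<and> (\<forall>x. linform B J L x = 0)
      \<or> (\<forall>x. linform B I J x = 0) \<and>
        (\<forall>a b. (\<forall>x. a * linform B I L x + b * linform B J L x = 0) \<longrightarrow> a = 0 \<and> b = 0)"
      using final_pick[of c1 c2 c3 B, OF _ _ _ altlf gB] c(1,2) by auto
    have sub: "{I,J,L} \<subseteq> {1..5}" unfolding IJL(1) using c(3-5) by simp
    then have IJL5: "I \<in> {1..5}" "J \<in> {1..5}" "L \<in> {1..5}" by simp_all
    have colK0: "\<forall>k\<in>{1..5}. B0 K k c1 = 0 \<and> B0 K k c2 = 0 \<and> B0 K k c3 = 0"
    proof
      fix k :: nat assume k: "k \<in> {1..5}"
      have "B0 K k d = 0" if "d \<in> {1..5}" "d \<notin> {a,b}" for d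
        unfolding B0_def BK conj5_div using gM k that by simp
      then show "B0 K k c1 = 0 \<and> B0 K k c2 = 0 \<and> B0 K k c3 = 0" using c by blast
    qed
    have colK: "B K i d = 0" if "d \<in> {c1,c2,c3}" for i d
      unfolding Beq h_def by (rule conj_hmat_col[OF c(1-5) colK0 that])
    show ?thesis
    proof (cases "\<exists>k\<in>{1..4}. \<forall>i\<in>{1..5}. \<forall>j\<in>{1..5}. B k i j = 0")
      case True
      then obtain k where k: "k \<in> {1..4}" "\<forall>i\<in>{1..5}. \<forall>j\<in>{1..5}. B k i j = 0" by blast
      show ?thesis
        by (intro exI[of _ g4] exI[of _ g5] exI[of _ k] exI[of _ I] exI[of _ J] exI[of _ L])
          (use u4 u5 k IJL IJL5 in \<open>simp add: Let_def B_def[symmetric]\<close>)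
    next
      case False
      then have nzB: "\<forall>k\<in>{1..4}. \<exists>i\<in>{1..5}. \<exists>j\<in>{1..5}. B k i j \<noteq> 0" by blast
      have cols: "\<forall>i\<in>{1..5}. B K i I = 0 \<and> B K i J = 0 \<and> B K i L = 0"
        using colK IJL(1) by blast
      show ?thesis
        by (intro exI[of _ g4] exI[of _ g5] exI[of _ K] exI[of _ I] exI[of _ J] exI[of _ L])
          (use u4 u5 K1 IJL IJL5 nzB cols fin in \<open>simp only: Let_def B_def[symmetric]; blast\<close>)
    qed
  qed
qed

end
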